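(* Let $n\ge 5$ and let $\mathcal{H}$ be a Berge-$K_4$-saturated $3$-graph on $n$ vertices. (i) If $u,v\in V(\mathcal{H})$ are distinct and $(u,v)$ is good, then for every witness (distinct vertices $x,y\notin\{u,v\}$ and distinct hyperedges $e_{ux},e_{uy},e_{vx},e_{vy},e_{xy}$ containing the respective pairs) every hyperedge of $\mathcal{H}$ containing both $u$ and $v$ is among $e_{ux},e_{uy},e_{vx},e_{vy},e_{xy}$. Moreover, $d_{\mathcal{H}}(u,v)\le 2$ and $d_{\mathcal{H}}(w)\ge 3$ for every $w\in N_{\mathcal{H}}(u,v)$. (ii) Let $v_1v_2v_3\in E(\mathcal{H})$ with $d_{\mathcal{H}}(v_1)\le d_{\mathcal{H}}(v_2)\le d_{\mathcal{H}}(v_3)$. If $d_{\mathcal{H}}(v_1)\le 2$, then $(v_2,v_3)$ is bad. If $d_{\mathcal{H}}(v_1)\le d_{\mathcal{H}}(v_2)\le 2$, then $(v_1,v_2)$, $(v_1,v_3)$ and $(v_2,v_3)$ are bad. If $d_{\mathcal{H}}(v_1)\le d_{\mathcal{H}}(v_2)\le d_{\mathcal{H}}(v_3)\le 2$, then $(v_1,u)$, $(v_2,u)$ and $(v_3,u)$ are bad for every $u\in V(\mathcal{H})\setminus\{v_1,v_2,v_3\}$.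
   Context: A $3$-graph has all hyperedges of size $3$. A $3$-graph contains a Berge-$K_4$ if there are $4$ distinct vertices and $6$ distinct hyperedges, one containing each of the $6$ pairs of these vertices. $\mathcal{H}$ is Berge-$K_4$-saturated if it contains no Berge-$K_4$ but adding any $3$-set not already a hyperedge creates a Berge-$K_4$. For distinct vertices $u,v$, the pair $(u,v)$ is good if adding the new edge $\{u,v\}$ creates a Berge-$K_4$, i.e. there exist distinct vertices $x,y\notin\{u,v\}$ and five distinct hyperedges $e_{ux},e_{uy},e_{vx},e_{vy},e_{xy}$ of $\mathcal{H}$ with $e_{ab}\supseteq\{a,b\}$; otherwise $(u,v)$ is bad. $d_{\mathcal{H}}(w)$ is the number of hyperedges containing $w$; $N_{\mathcal{H}}(u,v)=\{w: uvw\in E(\mathcal{H})\}$ and $d_{\mathcal{H}}(u,v)=|N_{\mathcal{H}}(u,v)|$. *)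

theory Defs
  imports Main
begin

definition uniform3 :: "'a set \<Rightarrow> 'a set set \<Rightarrow> bool" where
  "uniform3 V E \<longleftrightarrow> (\<forall>e\<in>E. e \<subseteq> V \<and> card e = 3)"

definition berge_K4 :: "'a set set \<Rightarrow> bool" where
  "berge_K4 E \<longleftrightarrow> (\<exists>a b c d eab eac ead ebc ebd ecd.
     distinct [a, b, c, d] \<and> distinct [eab, eac, ead, ebc, ebd, ecd] \<and>
     eab \<in> E \<and> eac \<in> E \<and> ead \<in> E \<and> ebc \<in> E \<and> ebd \<in> E \<and> ecd \<in> E \<and>
     {a, b} \<subseteq> eab \<and> {a, c} \<subseteq> eac \<and> {a, d} \<subseteq> ead \<and>
     {b, c} \<subseteq> ebc \<and> {b, d} \<subseteq> ebd \<and> {c, d} \<subseteq> ecd)"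

definition berge_K4_saturated :: "'a set \<Rightarrow> 'a set set \<Rightarrow> bool" where
  "berge_K4_saturated V E \<longleftrightarrow> uniform3 V E \<and> \<not> berge_K4 E \<and>
     (\<forall>T. T \<subseteq> V \<and> card T = 3 \<and> T \<notin> E \<longrightarrow> berge_K4 (insert T E))"

definition good_witness :: "'a set set \<Rightarrow> 'a \<Rightarrow> 'a \<Rightarrow> 'a \<Rightarrow> 'a \<Rightarrow>
    'a set \<Rightarrow> 'a set \<Rightarrow> 'a set \<Rightarrow> 'a set \<Rightarrow> 'a set \<Rightarrow> bool" where
  "good_witness E u v x y eux euy evx evy exy \<longleftrightarrow>
     x \<noteq> y \<and> x \<notin> {u, v} \<and> y \<notin> {u, v} \<and>
     distinct [eux, euy, evx, evy, exy] \<and>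
     eux \<in> E \<and> euy \<in> E \<and> evx \<in> E \<and> evy \<in> E \<and> exy \<in> E \<and>
     {u, x} \<subseteq> eux \<and> {u, y} \<subseteq> euy \<and> {v, x} \<subseteq> evx \<and> {v, y} \<subseteq> evy \<and> {x, y} \<subseteq> exy"

definition good_pair :: "'a set set \<Rightarrow> 'a \<Rightarrow> 'a \<Rightarrow> bool" where
  "good_pair E u v \<longleftrightarrow> (\<exists>x y eux euy evx evy exy. good_witness E u v x y eux euy evx evy exy)"

definition deg :: "'a set set \<Rightarrow> 'a \<Rightarrow> nat" where
  "deg E w = card {e \<in> E. w \<in> e}"

definition codeg_nbhd :: "'a set set \<Rightarrow> 'a \<Rightarrow> 'a \<Rightarrow> 'a set" where
  "codeg_nbhd E u v = {w. {u, v, w} \<in> E}"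

definition codeg :: "'a set set \<Rightarrow> 'a \<Rightarrow> 'a \<Rightarrow> nat" where
  "codeg E u v = card (codeg_nbhd E u v)"

end

theory Submission
  imports Defs
begin

lemma deg3:
  assumes "finite E" "a \<in> E" "b \<in> E" "c \<in> E" "a \<noteq> b" "a \<noteq> c" "b \<noteq> c"
    "w \<in> a" "w \<in> b" "w \<in> c"
  shows "3 \<le> deg E w"
proof -
  have "{a,b,c} \<subseteq> {e \<in> E. w \<in> e}" using assms by auto
  moreover have "finite {e \<in> E. w \<in> e}" using assms by auto
  ultimately have "card {a,b,c} \<le> deg E w" unfolding deg_def by (rule card_mono[rotated])
  moreover have "card {a,b,c} = 3" using assms by auto
  ultimately show ?thesis by simp
qed

lemma deg2:
  assumes "finite E" "deg E w \<le> 2" "a \<in> E" "b \<in> E" "a \<noteq> b" "w \<in> a" "w \<in> b"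
    "e \<in> E" "w \<in> e"
  shows "e = a \<or> e = b"
proof (rule ccontr)
  assume "\<not> (e = a \<or> e = b)"
  then have "3 \<le> deg E w" using deg3[of E a b e w] assms by auto
  then show False using assms by simp
qed

lemma part_i1:
  assumes "\<not> berge_K4 E" "u \<noteq> v" "good_witness E u v x y eux euy evx evy exy"
    "e \<in> E" "{u, v} \<subseteq> e"
  shows "e \<in> {eux, euy, evx, evy, exy}"
proof (rule ccontr)
  assume n: "e \<notin> {eux, euy, evx, evy, exy}"
  from assms(3) have g: "x \<noteq> y" "x \<notin> {u, v}" "y \<notin> {u, v}"
     "distinct [eux, euy, evx, evy, exy]"
     "eux \<in> E" "euy \<in> E" "evx \<in> E" "evy \<in> E" "exy \<in> E"
     "{u, x} \<subseteq> eux" "{u, y} \<subseteq> euy" "{v, x} \<subseteq> evx" "{v, y} \<subseteq> evy" "{x, y} \<subseteq> exy"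
    unfolding good_witness_def by blast+
  have d1: "distinct [u, v, x, y]" using g(1-3) assms(2) by auto
  have d2: "distinct [e, eux, euy, evx, evy, exy]" using g(4) n by simp
  have "berge_K4 E" unfolding berge_K4_def
    using d1 d2 assms(4,5) g(5-14) by blast
  then show False using assms by simp
qed

lemma nbhd:
  assumes "uniform3 V E" "\<not> berge_K4 E" "u \<noteq> v" "good_witness E u v x y eux euy evx evy exy"
  shows "codeg_nbhd E u v \<subseteq> {x, y}"
proof
  fix w assume "w \<in> codeg_nbhd E u v"
  then have w: "{u,v,w} \<in> E" by (simp add: codeg_nbhd_def)
  then have c: "card {u,v,w} = 3" using assms(1) by (auto simp: uniform3_def)
  then have wu: "w \<noteq> u" "w \<noteq> v" by (auto simp: card_insert_if split: if_splits)
  have "{u,v,w} \<in> {eux, euy, evx, evy, exy}" using part_i1[OF assms(2,3,4) w] by auto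
  moreover from assms(4) have g: "x \<noteq> y" "x \<notin> {u, v}" "y \<notin> {u, v}"
     "{u, x} \<subseteq> eux" "{u, y} \<subseteq> euy" "{v, x} \<subseteq> evx" "{v, y} \<subseteq> evy" "{x, y} \<subseteq> exy"
    unfolding good_witness_def by blast+
  ultimately have "x \<in> {u,v,w} \<or> y \<in> {u,v,w}" by blast
  then show "w \<in> {x,y}" using g(2,3) by blast
qed

lemma finE: assumes "finite V" "uniform3 V E" shows "finite E"
proof -
  have "E \<subseteq> Pow V" using assms by (auto simp: uniform3_def)
  then show ?thesis using assms(1) finite_subset by blast
qed

lemma nbhd_deg:
  assumes "finite V" "uniform3 V E" "\<not> berge_K4 E" "u \<noteq> v" "good_pair E u v"
    "w \<in> codeg_nbhd E u v"
  shows "3 \<le> deg E w"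
proof -
  obtain x y eux euy evx evy exy where g: "good_witness E u v x y eux euy evx evy exy"
    using assms(5) by (auto simp: good_pair_def)
  have fE: "finite E" using finE assms by blast
  have "w \<in> {x,y}" using nbhd[OF assms(2,3,4) g] assms(6) by auto
  then show ?thesis
  proof
    assume "w = x" then show ?thesis using deg3[OF fE, of eux evx exy w] g
      unfolding good_witness_def by auto
  next
    assume "w \<in> {y}" then show ?thesis using deg3[OF fE, of euy evy exy w] g
      unfolding good_witness_def by auto
  qed
qed

lemma two_low:
  assumes "finite E" "good_pair E a b" "deg E a \<le> 2" "deg E b \<le> 2" "T \<in> E" "a \<in> T" "b \<in> T"
  shows False
proof -
  obtain x y eax eay ebx eby exy where g: "good_witness E a b x y eax eay ebx eby exy"
    using assms(2) by (auto simp: good_pair_def)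
  have "T = eax \<or> T = eay" using deg2[OF assms(1,3), of eax eay T] g assms
    unfolding good_witness_def by auto
  moreover have "T = ebx \<or> T = eby" using deg2[OF assms(1,4), of ebx eby T] g assms
    unfolding good_witness_def by auto
  ultimately show False using g unfolding good_witness_def by auto
qed

lemma tri_low:
  assumes "finite E" "good_pair E a u" "deg E a \<le> 2" "deg E b \<le> 2" "deg E c \<le> 2"
    "{a,b,c} \<in> E"
  shows False
proof -
  obtain x y eax eay eux euy exy where g: "good_witness E a u x y eax eay eux euy exy"
    using assms(2) by (auto simp: good_pair_def)
  have "{a,b,c} = eax \<or> {a,b,c} = eay" using deg2[OF assms(1,3), of eax eay "{a,b,c}"] g assms
    unfolding good_witness_def by auto
  then show False
  proof
    assume h: "{a,b,c} = eax"
    then have "x \<in> {b,c}" using g unfolding good_witness_def by auto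
    then have "deg E x \<le> 2" using assms by auto
    moreover have "3 \<le> deg E x" using deg3[OF assms(1), of eax eux exy x] g
      unfolding good_witness_def by auto
    ultimately show False by simp
  next
    assume h: "{a,b,c} = eay"
    then have "y \<in> {b,c}" using g unfolding good_witness_def by auto
    then have "deg E y \<le> 2" using assms by auto
    moreover have "3 \<le> deg E y" using deg3[OF assms(1), of eay euy exy y] g
      unfolding good_witness_def by auto
    ultimately show False by simp
  qed
qed

theorem fact3p1:
  fixes V :: "'a set" and E :: "'a set set"
  assumes "finite V" and "card V \<ge> 5" and "berge_K4_saturated V E"
  shows "(\<forall>u\<in>V. \<forall>v\<in>V. u \<noteq> v \<and> good_pair E u v \<longrightarrow>
            (\<forall>x y eux euy evx evy exy. good_witness E u v x y eux euy evx evy exy \<longrightarrow>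
               (\<forall>e\<in>E. {u, v} \<subseteq> e \<longrightarrow> e \<in> {eux, euy, evx, evy, exy})) \<and>
            codeg E u v \<le> 2 \<and>
            (\<forall>w\<in>codeg_nbhd E u v. deg E w \<ge> 3))
       \<and> (\<forall>v1 v2 v3. {v1, v2, v3} \<in> E \<and> deg E v1 \<le> deg E v2 \<and> deg E v2 \<le> deg E v3 \<longrightarrow>
            (deg E v1 \<le> 2 \<longrightarrow> \<not> good_pair E v2 v3) \<and>
            (deg E v2 \<le> 2 \<longrightarrow> \<not> good_pair E v1 v2 \<and> \<not> good_pair E v1 v3 \<and> \<not> good_pair E v2 v3) \<and>
            (deg E v3 \<le> 2 \<longrightarrow> (\<forall>u \<in> V - {v1, v2, v3}.
               \<not> good_pair E v1 u \<and> \<not> good_pair E v2 u \<and> \<not> good_pair E v3 u)))"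
proof -
  have U: "uniform3 V E" and K: "\<not> berge_K4 E" using assms(3)
    by (auto simp: berge_K4_saturated_def)
  have fE: "finite E" using finE[OF assms(1) U] .
  have codeg2: "codeg E u v \<le> 2" if uv: "u \<noteq> v" and gp: "good_pair E u v" for u v
  proof -
    obtain x y eux euy evx evy exy where g: "good_witness E u v x y eux euy evx evy exy"
      using gp by (auto simp: good_pair_def)
    have "card (codeg_nbhd E u v) \<le> card {x,y}"
      using nbhd[OF U K uv g] by (intro card_mono) auto
    also have "\<dots> \<le> 2" by (simp add: card_insert_if)
    finally show ?thesis by (simp add: codeg_def)
  qed
  have P2: "(deg E v1 \<le> 2 \<longrightarrow> \<not> good_pair E v2 v3) \<and>
            (deg E v2 \<le> 2 \<longrightarrow> \<not> good_pair E v1 v2 \<and> \<not> good_pair E v1 v3 \<and> \<not> good_pair E v2 v3) \<and>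
            (deg E v3 \<le> 2 \<longrightarrow> (\<forall>u \<in> V - {v1, v2, v3}.
               \<not> good_pair E v1 u \<and> \<not> good_pair E v2 u \<and> \<not> good_pair E v3 u))"
    if T: "{v1, v2, v3} \<in> E" and d: "deg E v1 \<le> deg E v2" "deg E v2 \<le> deg E v3" for v1 v2 v3
  proof -
    have "card {v1,v2,v3} = 3" using T U by (auto simp: uniform3_def)
    then have ds: "v1 \<noteq> v2" "v1 \<noteq> v3" "v2 \<noteq> v3" by (auto simp: card_insert_if split: if_splits)
    have i1: "v1 \<in> codeg_nbhd E v2 v3" using T by (simp add: codeg_nbhd_def insert_commute)
    have i2: "v2 \<in> codeg_nbhd E v1 v3" using T by (simp add: codeg_nbhd_def insert_commute)
    have A: "\<not> good_pair E v2 v3" if "deg E v1 \<le> 2"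
      using nbhd_deg[OF assms(1) U K ds(3) _ i1] that by fastforce
    have B: "\<not> good_pair E v1 v3" if "deg E v2 \<le> 2"
      using nbhd_deg[OF assms(1) U K ds(2) _ i2] that by fastforce
    have C: "\<not> good_pair E v1 v2" if "deg E v2 \<le> 2"
    proof
      assume "good_pair E v1 v2"
      from two_low[OF fE this _ that T] d that show False by simp
    qed
    have D: "\<not> good_pair E a u" if "deg E v3 \<le> 2" "a \<in> {v1,v2,v3}" for a u
    proof
      assume gp: "good_pair E a u"
      have dd: "deg E v1 \<le> 2" "deg E v2 \<le> 2" "deg E v3 \<le> 2" using that d by auto
      from that(2) show False
      proof (elim insertE)
        assume "a = v1" then show False using tri_low[OF fE _ dd T] gp by simp
      next
        assume "a = v2" then show False using tri_low[OF fE _ dd(2,1,3), of u] gp T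
          by (simp add: insert_commute)
      next
        assume "a = v3" then show False using tri_low[OF fE _ dd(3,1,2), of u] gp T
          by (simp add: insert_commute)
      qed simp
    qed
    show ?thesis
    proof (intro conjI impI ballI)
      assume "deg E v1 \<le> 2" then show "\<not> good_pair E v2 v3" by (rule A)
    next
      assume h: "deg E v2 \<le> 2"
      show "\<not> good_pair E v1 v2" using C[OF h] .
      show "\<not> good_pair E v1 v3" using B[OF h] .
      show "\<not> good_pair E v2 v3" using A h d(1) by simp
    next
      fix u assume h: "deg E v3 \<le> 2"
      show "\<not> good_pair E v1 u" by (rule D[OF h]) simp
      show "\<not> good_pair E v2 u" by (rule D[OF h]) simp
      show "\<not> good_pair E v3 u" by (rule D[OF h]) simp
    qed
  qed
  show ?thesis
  proof (rule conjI)
    show "\<forall>u\<in>V. \<forall>v\<in>V. u \<noteq> v \<and> good_pair E u v \<longrightarrow>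
            (\<forall>x y eux euy evx evy exy. good_witness E u v x y eux euy evx evy exy \<longrightarrow>
               (\<forall>e\<in>E. {u, v} \<subseteq> e \<longrightarrow> e \<in> {eux, euy, evx, evy, exy})) \<and>
            codeg E u v \<le> 2 \<and>
            (\<forall>w\<in>codeg_nbhd E u v. deg E w \<ge> 3)"
    proof (intro ballI impI conjI allI)
      fix u v assume h: "u \<noteq> v \<and> good_pair E u v"
      show "codeg E u v \<le> 2" using codeg2 h by simp
      fix w assume "w \<in> codeg_nbhd E u v"
      then show "3 \<le> deg E w" using nbhd_deg[OF assms(1) U K] h by blast
    next
      fix u v x y eux euy evx evy exy e
      assume h: "u \<noteq> v \<and> good_pair E u v" and h2: "good_witness E u v x y eux euy evx evy exy"
        "e \<in> E" "{u, v} \<subseteq> e"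
      from h have "u \<noteq> v" by simp
      from part_i1[OF K this h2] show "e \<in> {eux, euy, evx, evy, exy}" .
    qed
  next
    show "\<forall>v1 v2 v3. {v1, v2, v3} \<in> E \<and> deg E v1 \<le> deg E v2 \<and> deg E v2 \<le> deg E v3 \<longrightarrow>
            (deg E v1 \<le> 2 \<longrightarrow> \<not> good_pair E v2 v3) \<and>
            (deg E v2 \<le> 2 \<longrightarrow> \<not> good_pair E v1 v2 \<and> \<not> good_pair E v1 v3 \<and> \<not> good_pair E v2 v3) \<and>
            (deg E v3 \<le> 2 \<longrightarrow> (\<forall>u \<in> V - {v1, v2, v3}.
               \<not> good_pair E v1 u \<and> \<not> good_pair E v2 u \<and> \<not> good_pair E v3 u))"
    proof (intro allI impI)
      fix v1 v2 v3 assume h: "{v1, v2, v3} \<in> E \<and> deg E v1 \<le> deg E v2 \<and> deg E v2 \<le> deg E v3"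
      then have a: "{v1, v2, v3} \<in> E" and b: "deg E v1 \<le> deg E v2" and c: "deg E v2 \<le> deg E v3" by auto
      show "(deg E v1 \<le> 2 \<longrightarrow> \<not> good_pair E v2 v3) \<and>
            (deg E v2 \<le> 2 \<longrightarrow> \<not> good_pair E v1 v2 \<and> \<not> good_pair E v1 v3 \<and> \<not> good_pair E v2 v3) \<and>
            (deg E v3 \<le> 2 \<longrightarrow> (\<forall>u \<in> V - {v1, v2, v3}.
               \<not> good_pair E v1 u \<and> \<not> good_pair E v2 u \<and> \<not> good_pair E v3 u))"
        by (rule P2[OF a b c])
    qed
  qed
qed

end
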